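(* Let $G$ be a simple graph on vertex set $\{1,\ldots,n\}$ and $k\ge 1$ an integer such that $G$ has a non-empty $k$-core, and let $V_{k\text{-core}}$ denote the vertex set of the $k$-core of $G$. Let $\mathbf{x}^{(k)}=(x^{(k)}_1,\ldots,x^{(k)}_n)^{\mathrm T}$ be a Perron eigenvector of $\mathcal{A}^{(k)}(G)$, i.e. a nonzero entrywise nonnegative eigenvector of $\mathcal{A}^{(k)}(G)$ corresponding to the eigenvalue $\rho_k(G)$. Then $\operatorname{supp}(\mathbf{x}^{(k)})\subseteq V_{k\text{-core}}$. Moreover, if the subgraph of $G$ induced by $V_{k\text{-core}}$ is connected, then $\operatorname{supp}(\mathbf{x}^{(k)})=V_{k\text{-core}}$.
   Context: All graphs are finite, simple and undirected. The $k$-core of a graph $G$ is the maximal subgraph of $G$ in which every vertex has degree at least $k$ within the subgraph. For a tensor $\mathcal{A}=(a_{i_1 i_2\cdots i_m})$ of order $m$ and dimension $n$ and $\mathbf{x}\in\mathbb{C}^n$, $\mathcal{A}\mathbf{x}^{m-1}\in\mathbb{C}^n$ has $i$-th component $\sum_{i_2,\ldots,i_m=1}^n a_{i i_2\cdots i_m}x_{i_2}\cdots x_{i_m}$. A complex number $\lambda$ is an eigenvalue of $\mathcal{A}$ if there is a nonzero $\mathbf{x}\in\mathbb{C}^n$ with $\mathcal{A}\mathbf{x}^{m-1}=\lambda\mathbf{x}^{[m-1]}$, where $\mathbf{x}^{[m-1]}=(x_1^{m-1},\ldots,x_n^{m-1})^{\mathrm T}$; $\mathbf{x}$ is then an eigenvector.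 The spectral radius $\rho(\mathcal{A})$ is the largest modulus of the eigenvalues of $\mathcal{A}$. For a graph $G$ on vertex set $\{1,\ldots,n\}$ with neighborhoods $N_G(i)$, the $k$-adjacency tensor $\mathcal{A}^{(k)}(G)=(a_{i_1 i_2\cdots i_{k+1}})$ is the order-$(k+1)$, dimension-$n$ tensor with $a_{i_1 i_2\cdots i_{k+1}}=1/k!$ if $i_1,\ldots,i_{k+1}$ are pairwise distinct and $\{i_2,\ldots,i_{k+1}\}\subseteq N_G(i_1)$, and $0$ otherwise. Equivalently, $(\mathcal{A}^{(k)}(G)\mathbf{x}^k)_i=\sum_{T\subseteq N_G(i),\,|T|=k}\prod_{j\in T}x_j$. Define $\rho_k(G)=\rho(\mathcal{A}^{(k)}(G))$. The support of $\mathbf{x}$ is $\operatorname{supp}(\mathbf{x})=\{i: x_i\neq 0\}$. *)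

theory Defs
  imports Complex_Main
begin

definition simple_graph :: "nat \<Rightarrow> (nat \<Rightarrow> nat \<Rightarrow> bool) \<Rightarrow> bool" where
  "simple_graph n E \<longleftrightarrow> (\<forall>i j. E i j \<longrightarrow> E j i) \<and> (\<forall>i. \<not> E i i)
     \<and> (\<forall>i j. E i j \<longrightarrow> i \<in> {1..n} \<and> j \<in> {1..n})"

definition nbhd :: "nat \<Rightarrow> (nat \<Rightarrow> nat \<Rightarrow> bool) \<Rightarrow> nat \<Rightarrow> nat set" where
  "nbhd n E i = {j \<in> {1..n}. E i j}"

text \<open>Vertex set of the k-core: the vertex set of the maximal subgraph in which every
  vertex has degree at least k, i.e. the union of all vertex sets W whose induced
  subgraph has minimum degree at least k.\<close>

definition min_deg_ge :: "nat \<Rightarrow> (nat \<Rightarrow> nat \<Rightarrow> bool) \<Rightarrow> nat \<Rightarrow> nat set \<Rightarrow> bool" where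
  "min_deg_ge n E k W \<longleftrightarrow> W \<subseteq> {1..n} \<and> (\<forall>v\<in>W. card (nbhd n E v \<inter> W) \<ge> k)"

definition k_core_vertices :: "nat \<Rightarrow> (nat \<Rightarrow> nat \<Rightarrow> bool) \<Rightarrow> nat \<Rightarrow> nat set" where
  "k_core_vertices n E k = \<Union> {W. min_deg_ge n E k W}"

definition induced_connected :: "(nat \<Rightarrow> nat \<Rightarrow> bool) \<Rightarrow> nat set \<Rightarrow> bool" where
  "induced_connected E S \<longleftrightarrow>
     (\<forall>u\<in>S. \<forall>v\<in>S. (\<lambda>a b. a \<in> S \<and> b \<in> S \<and> E a b)\<^sup>*\<^sup>* u v)"

text \<open>(A^(k)(G) x^k)_i = sum over k-subsets T of N(i) of prod_{j in T} x_j.\<close>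
definition kadj_apply ::
  "nat \<Rightarrow> (nat \<Rightarrow> nat \<Rightarrow> bool) \<Rightarrow> nat \<Rightarrow> (nat \<Rightarrow> complex) \<Rightarrow> nat \<Rightarrow> complex" where
  "kadj_apply n E k x i = (\<Sum>T \<in> {T. T \<subseteq> nbhd n E i \<and> card T = k}. \<Prod>j\<in>T. x j)"

text \<open>Eigenpair of the order-(k+1), dimension-n tensor A^(k)(G): A x^k = lambda x^[k],
  x nonzero in C^n (vectors are functions on nat, only components 1..n matter).\<close>
definition kadj_eigenpair ::
  "nat \<Rightarrow> (nat \<Rightarrow> nat \<Rightarrow> bool) \<Rightarrow> nat \<Rightarrow> complex \<Rightarrow> (nat \<Rightarrow> complex) \<Rightarrow> bool" where
  "kadj_eigenpair n E k lam x \<longleftrightarrow> (\<exists>i\<in>{1..n}. x i \<noteq> 0) \<and>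
     (\<forall>i\<in>{1..n}. kadj_apply n E k x i = lam * x i ^ k)"

definition kadj_eigenvalue :: "nat \<Rightarrow> (nat \<Rightarrow> nat \<Rightarrow> bool) \<Rightarrow> nat \<Rightarrow> complex \<Rightarrow> bool" where
  "kadj_eigenvalue n E k lam \<longleftrightarrow> (\<exists>x. kadj_eigenpair n E k lam x)"

definition rho_k :: "nat \<Rightarrow> (nat \<Rightarrow> nat \<Rightarrow> bool) \<Rightarrow> nat \<Rightarrow> real" where
  "rho_k n E k = Sup {cmod lam | lam. kadj_eigenvalue n E k lam}"

definition supp :: "nat \<Rightarrow> (nat \<Rightarrow> 'a::zero) \<Rightarrow> nat set" where
  "supp n x = {i \<in> {1..n}. x i \<noteq> 0}"

end

theory Submission
  imports Defs
begin
definition fam :: "nat \<Rightarrow> (nat \<Rightarrow> nat \<Rightarrow> bool) \<Rightarrow> nat \<Rightarrow> nat \<Rightarrow> nat set set" where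
  "fam n E k i = {T. T \<subseteq> nbhd n E i \<and> card T = k}"

definition ka :: "nat \<Rightarrow> (nat \<Rightarrow> nat \<Rightarrow> bool) \<Rightarrow> nat \<Rightarrow> (nat \<Rightarrow> real) \<Rightarrow> nat \<Rightarrow> real" where
  "ka n E k y i = (\<Sum>T\<in>fam n E k i. \<Prod>j\<in>T. y j)"

lemma nbhd_sub: "nbhd n E i \<subseteq> {1..n}" by (auto simp: nbhd_def)
lemma finite_nbhd[simp]: "finite (nbhd n E i)" by (rule finite_subset[OF nbhd_sub]) auto

lemma fam_sub_pow: "fam n E k i \<subseteq> Pow {1..n}"
  by (auto simp: fam_def nbhd_def)

lemma finite_fam[simp]: "finite (fam n E k i)"
  by (rule finite_subset[OF fam_sub_pow]) auto

lemma card_fam: "card (fam n E k i) \<le> 2 ^ n"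
proof -
  have "card (fam n E k i) \<le> card (Pow {1..n})"
    by (rule card_mono[OF _ fam_sub_pow]) auto
  thus ?thesis by (simp add: card_Pow)
qed

lemma fam_finite_T: "T \<in> fam n E k i \<Longrightarrow> finite T \<and> card T = k \<and> T \<subseteq> nbhd n E i"
  by (auto simp: fam_def intro: finite_subset[OF _ finite_nbhd])

lemma kadj_apply_real:
  "kadj_apply n E k (\<lambda>i. complex_of_real (y i)) i = complex_of_real (ka n E k y i)"
  by (simp add: kadj_apply_def ka_def fam_def)

lemma ka_cong: "(\<And>j. j \<in> {1..n} \<Longrightarrow> y j = z j) \<Longrightarrow> ka n E k y i = ka n E k z i"
  unfolding ka_def
  by (intro sum.cong refl prod.cong) (auto simp: fam_def nbhd_def)

lemma ka_nonneg: "(\<And>j. y j \<ge> 0) \<Longrightarrow> ka n E k y i \<ge> 0"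
  unfolding ka_def by (intro sum_nonneg prod_nonneg) auto

lemma ka_mono: "(\<And>j. 0 \<le> y j) \<Longrightarrow> (\<And>j. y j \<le> z j) \<Longrightarrow> ka n E k y i \<le> ka n E k z i"
  unfolding ka_def by (intro sum_mono prod_mono) auto

lemma ka_ge_term: "(\<And>j. y j \<ge> 0) \<Longrightarrow> T \<in> fam n E k i \<Longrightarrow> (\<Prod>j\<in>T. y j) \<le> ka n E k y i"
  unfolding ka_def by (rule member_le_sum) (auto intro: prod_nonneg)

lemma ka_scale: "ka n E k (\<lambda>j. c * y j) i = c ^ k * ka n E k y i"
  unfolding ka_def sum_distrib_left
  by (intro sum.cong refl) (auto simp: prod.distrib fam_def dest: fam_finite_T)

lemma ka_pos_term: 
  assumes "\<And>j. y j \<ge> 0" "ka n E k y i > 0"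
  shows "\<exists>T\<in>fam n E k i. \<forall>j\<in>T. y j > 0"
proof (rule ccontr)
  assume "\<not> ?thesis"
  hence "\<forall>T\<in>fam n E k i. (\<Prod>j\<in>T. y j) = 0"
    using assms(1) by (metis less_eq_real_def prod_zero_iff fam_finite_T)
  hence "ka n E k y i = 0" by (simp add: ka_def)
  with assms show False by simp
qed

lemma ka_zero_closed:
  assumes "\<And>j. j \<notin> D \<Longrightarrow> y j = 0" "card (nbhd n E i \<inter> D) < k"
  shows "ka n E k y i = 0"
  unfolding ka_def
proof (intro sum.neutral ballI)
  fix T assume T: "T \<in> fam n E k i"
  have "\<not> T \<subseteq> D"
  proof
    assume "T \<subseteq> D"
    hence "T \<subseteq> nbhd n E i \<inter> D" using T by (auto simp: fam_def)
    hence "card T \<le> card (nbhd n E i \<inter> D)" by (intro card_mono) auto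
    with T assms(2) show False by (auto simp: fam_def)
  qed
  then obtain j where "j \<in> T" "j \<notin> D" by auto
  thus "(\<Prod>j\<in>T. y j) = 0" using assms(1) fam_finite_T[OF T] by (metis prod_zero_iff)
qed

lemma prod_strict_mono_one:
  fixes a b :: "nat \<Rightarrow> real"
  assumes "finite T" "\<And>j. j \<in> T \<Longrightarrow> 0 \<le> a j" "\<And>j. j \<in> T \<Longrightarrow> a j \<le> b j"
    "\<And>j. j \<in> T \<Longrightarrow> 0 < b j" "i \<in> T" "a i < b i"
  shows "prod a T < prod b T"
proof -
  have "prod a T = a i * prod a (T - {i})" using assms by (simp add: prod.remove)
  also have "\<dots> \<le> a i * prod b (T - {i})"
    using assms by (intro mult_left_mono prod_mono) auto
  also have "\<dots> < b i * prod b (T - {i})"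
    using assms by (intro mult_strict_right_mono prod_pos) auto
  also have "\<dots> = prod b T" using assms by (simp add: prod.remove)
  finally show ?thesis .
qed

lemma exists_T:
  assumes "u \<in> nbhd n E i \<inter> D" "card (nbhd n E i \<inter> D) \<ge> k" "k \<ge> 1"
  shows "\<exists>T\<in>fam n E k i. u \<in> T \<and> T \<subseteq> D"
proof -
  have "card (nbhd n E i \<inter> D - {u}) = card (nbhd n E i \<inter> D) - 1"
    using assms(1) by simp
  hence "k - 1 \<le> card (nbhd n E i \<inter> D - {u})" using assms by simp
  then obtain T' where T': "T' \<subseteq> nbhd n E i \<inter> D - {u}" "card T' = k - 1"
    using obtain_subset_with_card_n by metis
  have fT': "finite T'" using T' by (meson finite_Diff finite_Int finite_nbhd finite_subset)
  have "u \<notin> T'" using T' by auto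
  hence "card (insert u T') = k" using T' fT' assms(3) by simp
  thus ?thesis using T' assms(1) by (intro bexI[of _ "insert u T'"]) (auto simp: fam_def)
qed

lemma bw_real:
  fixes s :: "nat \<Rightarrow> real"
  assumes "\<And>m. \<bar>s m\<bar> \<le> K"
  shows "\<exists>r l. strict_mono r \<and> (s \<circ> r) \<longlonglongrightarrow> l"
proof -
  obtain r where r: "strict_mono r" "monoseq (\<lambda>m. s (r m))" using seq_monosub by blast
  have "Bseq (\<lambda>m. s (r m))" using assms by (intro BseqI'[where K=K]) auto
  hence "convergent (\<lambda>m. s (r m))" using r Bseq_monoseq_convergent by blast
  thus ?thesis using r by (auto simp: convergent_def o_def)
qed

lemma bw_finite:
  fixes f :: "nat \<Rightarrow> nat \<Rightarrow> real"
  assumes "finite I" "\<And>m j. j \<in> I \<Longrightarrow> \<bar>f m j\<bar> \<le> K"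
  shows "\<exists>r Y. strict_mono r \<and> (\<forall>j\<in>I. (\<lambda>m. f (r m) j) \<longlonglongrightarrow> Y j)"
  using assms
proof (induction I rule: finite_induct)
  case empty
  show ?case by (rule exI[of _ id]) (auto simp: strict_mono_def)
next
  case (insert a I)
  then obtain r Y where r: "strict_mono r" "\<forall>j\<in>I. (\<lambda>m. f (r m) j) \<longlonglongrightarrow> Y j" by auto
  have "\<And>m. \<bar>f (r m) a\<bar> \<le> K" using insert by auto
  then obtain q l where q: "strict_mono q" "((\<lambda>m. f (r m) a) \<circ> q) \<longlonglongrightarrow> l"
    using bw_real[of "\<lambda>m. f (r m) a"] by blast
  have "\<forall>j\<in>insert a I. (\<lambda>m. f ((r \<circ> q) m) j) \<longlonglongrightarrow> (Y(a := l)) j"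
  proof
    fix j assume j: "j \<in> insert a I"
    show "(\<lambda>m. f ((r \<circ> q) m) j) \<longlonglongrightarrow> (Y(a := l)) j"
    proof (cases "j = a")
      case True thus ?thesis using q by (simp add: o_def)
    next
      case False
      hence "j \<in> I" using j by auto
      hence "((\<lambda>m. f (r m) j) \<circ> q) \<longlonglongrightarrow> Y j" using r q LIMSEQ_subseq_LIMSEQ by blast
      thus ?thesis using False by (simp add: o_def)
    qed
  qed
  moreover have "strict_mono (r \<circ> q)" using r q by (simp add: strict_mono_o)
  ultimately show ?case by blast
qed

lemma ka_tendsto:
  assumes "\<And>j. (\<lambda>m. f m j) \<longlonglongrightarrow> Y j"
  shows "(\<lambda>m. ka n E k (f m) i) \<longlonglongrightarrow> ka n E k Y i"
  unfolding ka_def by (intro tendsto_intros assms)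

definition rel :: "(nat \<Rightarrow> nat \<Rightarrow> bool) \<Rightarrow> nat set \<Rightarrow> nat \<Rightarrow> nat \<Rightarrow> bool" where
  "rel E S = (\<lambda>a b. a \<in> S \<and> b \<in> S \<and> E a b)"

lemma induced_connected_rel: "induced_connected E S \<longleftrightarrow> (\<forall>u\<in>S. \<forall>v\<in>S. (rel E S)\<^sup>*\<^sup>* u v)"
  by (simp add: induced_connected_def rel_def)

lemma rel_closed_set:
  assumes "(rel E S)\<^sup>*\<^sup>* u v" "u \<in> Q" "\<And>a b. a \<in> Q \<Longrightarrow> a \<in> S \<Longrightarrow> b \<in> S \<Longrightarrow> E a b \<Longrightarrow> b \<in> Q"
  shows "v \<in> Q"
  using assms(1,2)
proof (induction rule: rtranclp_induct)
  case base thus ?case by simp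
next
  case (step y z) thus ?case using assms(3) by (auto simp: rel_def)
qed

lemma connected_cross:
  assumes "induced_connected E D" "P \<subseteq> D" "P \<noteq> {}" "D - P \<noteq> {}"
  shows "\<exists>i\<in>P. \<exists>j\<in>D - P. E i j"
proof (rule ccontr)
  assume c: "\<not> ?thesis"
  obtain a where a: "a \<in> P" using assms by auto
  obtain b where b: "b \<in> D - P" using assms by auto
  have "(rel E D)\<^sup>*\<^sup>* a b" using assms(1,2) a b by (auto simp: induced_connected_rel)
  hence "b \<in> P" by (rule rel_closed_set) (use a c in auto)
  with b show False by auto
qed

primrec layer :: "(nat \<Rightarrow> nat \<Rightarrow> bool) \<Rightarrow> nat set \<Rightarrow> nat set \<Rightarrow> nat \<Rightarrow> nat set" where
  "layer E D S 0 = S"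
| "layer E D S (Suc j) = layer E D S j \<union> {v\<in>D. \<exists>u\<in>layer E D S j. E u v}"

lemma layer_mono: "j \<le> j' \<Longrightarrow> layer E D S j \<subseteq> layer E D S j'"
  by (induction j' ) (auto simp: le_Suc_eq)

lemma layer_sub: "S \<subseteq> D \<Longrightarrow> layer E D S j \<subseteq> D"
  by (induction j) auto

lemma layer_reach:
  assumes "(rel E D)\<^sup>*\<^sup>* a v" "a \<in> S"
  shows "\<exists>j. v \<in> layer E D S j"
  using assms
proof (induction rule: rtranclp_induct)
  case base thus ?case by (intro exI[of _ 0]) simp
next
  case (step y z)
  then obtain j where "y \<in> layer E D S j" by auto
  hence "z \<in> layer E D S (Suc j)" using step by (auto simp: rel_def)
  thus ?case by blast
qed

definition dd :: "(nat \<Rightarrow> nat \<Rightarrow> bool) \<Rightarrow> nat set \<Rightarrow> nat set \<Rightarrow> nat \<Rightarrow> nat" where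
  "dd E D S v = (LEAST j. v \<in> layer E D S j)"

lemma dd_S: "v \<in> S \<Longrightarrow> dd E D S v = 0"
  unfolding dd_def by (rule Least_eq_0) simp

lemma dd_step:
  assumes "\<exists>j. b \<in> layer E D S j" "b \<notin> S"
  shows "\<exists>u. u \<in> layer E D S (dd E D S b) \<and> E u b \<and> dd E D S u < dd E D S b \<and> b \<in> D"
proof -
  have bin: "b \<in> layer E D S (dd E D S b)" unfolding dd_def using assms(1) by (rule LeastI_ex)
  obtain j where j: "dd E D S b = Suc j" using assms bin by (cases "dd E D S b") auto
  have "b \<notin> layer E D S j" using j unfolding dd_def by (metis lessI not_less_Least)
  then obtain u where u: "u \<in> layer E D S j" "E u b" "b \<in> D" using bin j by auto
  have "dd E D S u \<le> j" unfolding dd_def using u(1) by (rule Least_le)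
  moreover have "u \<in> layer E D S (dd E D S b)" using u(1) j layer_mono[of j "Suc j"] by auto
  ultimately show ?thesis using u j by auto
qed

lemma exp_ineq:
  fixes F fu fb k :: nat
  assumes "fu \<le> F" "(k+1) * fb \<le> fu" "1 \<le> fb" "k \<ge> 1"
  shows "(F - fu) + (k - 1) * F + 1 \<le> k * (F - fb)"
proof -
  have "fb \<le> F" using assms by (metis le_add2 le_trans mult_le_mono1 mult_1 add.commute)
  have a: "k * (F - fb) = k * F - k * fb" by (simp add: diff_mult_distrib2)
  have b: "(k - 1) * F = k * F - F" by (simp add: diff_mult_distrib)
  have c: "k * fb \<le> k * F" using \<open>fb \<le> F\<close> by simp
  have d: "F \<le> k * F" using assms(4) by simp
  have e: "(k+1)*fb = k * fb + fb" by simp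
  show ?thesis unfolding a b using assms c d e by linarith
qed

context
  fixes n k :: nat and E :: "nat \<Rightarrow> nat \<Rightarrow> bool" and D :: "nat set"
  assumes k1: "k \<ge> 1" and Dsub: "D \<subseteq> {1..n}" and Dne: "D \<noteq> {}"
    and Ddeg: "\<forall>v\<in>D. card (nbhd n E v \<inter> D) \<ge> k"
    and Dconn: "induced_connected E D" and Esym: "\<forall>i j. E i j \<longrightarrow> E j i"
begin

lemma finD[simp]: "finite D" using Dsub finite_subset by blast

definition feas :: "real \<Rightarrow> (nat \<Rightarrow> real) \<Rightarrow> bool" where
  "feas t y \<longleftrightarrow> (\<forall>j. 0 \<le> y j) \<and> (\<forall>j. j \<notin> D \<longrightarrow> y j = 0) \<and> sum y D = 1
     \<and> (\<forall>i\<in>D. t * y i ^ k \<le> ka n E k y i)"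

definition pos :: "real \<Rightarrow> (nat \<Rightarrow> real) \<Rightarrow> bool" where
  "pos t z \<longleftrightarrow> (\<forall>j. j \<notin> D \<longrightarrow> z j = 0) \<and> (\<forall>j\<in>D. 0 < z j)
     \<and> (\<forall>i\<in>D. t * z i ^ k \<le> ka n E k z i)"

definition BB :: real where "BB = (\<Sum>i\<in>D. real (card (fam n E k i)))"

definition rs :: real where "rs = Sup {t. \<exists>y. feas t y}"

lemma feas_bound:
  assumes "feas t y" shows "t \<le> BB"
proof -
  have y0: "\<And>j. 0 \<le> y j" and yD: "\<And>j. j \<notin> D \<Longrightarrow> y j = 0" and s1: "sum y D = 1"
    and c: "\<And>i. i \<in> D \<Longrightarrow> t * y i ^ k \<le> ka n E k y i"
    using assms by (auto simp: feas_def)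
  define M where "M = Max (y ` D)"
  have "M \<in> y ` D" unfolding M_def using Dne by (intro Max_in) auto
  then obtain i where i: "i \<in> D" "y i = M" by auto
  have le: "\<And>j. y j \<le> y i"
  proof -
    fix j show "y j \<le> y i"
    proof (cases "j \<in> D")
      case True thus ?thesis using i unfolding M_def by auto
    next
      case False thus ?thesis using yD y0 by simp
    qed
  qed
  have "1 \<le> (\<Sum>j\<in>D. y i)" unfolding s1[symmetric] by (intro sum_mono le)
  hence "1 \<le> real (card D) * y i" by simp
  hence yi: "y i > 0" by (smt (verit) mult_nonneg_nonpos of_nat_0_le_iff)
  have "ka n E k y i \<le> (\<Sum>T\<in>fam n E k i. y i ^ k)"
    unfolding ka_def
  proof (intro sum_mono)
    fix T assume T: "T \<in> fam n E k i"
    have "(\<Prod>j\<in>T. y j) \<le> (\<Prod>j\<in>T. y i)" by (intro prod_mono) (use y0 le in auto)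
    also have "\<dots> = y i ^ k" using fam_finite_T[OF T] by simp
    finally show "(\<Prod>j\<in>T. y j) \<le> y i ^ k" .
  qed
  also have "\<dots> = real (card (fam n E k i)) * y i ^ k" by simp
  finally have "t * y i ^ k \<le> real (card (fam n E k i)) * y i ^ k" using c[OF i(1)] by linarith
  hence "t \<le> real (card (fam n E k i))" using yi by (simp add: mult_le_cancel_right)
  also have "\<dots> \<le> BB" unfolding BB_def using i(1) by (intro member_le_sum) auto
  finally show ?thesis .
qed

lemma feas_one: "\<exists>y. feas 1 y"
proof -
  define y where "y = (\<lambda>j. if j \<in> D then 1 / real (card D) else 0)"
  have cD: "card D > 0" using Dne by (simp add: card_gt_0_iff)
  have "\<forall>i\<in>D. 1 * y i ^ k \<le> ka n E k y i"
  proof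
    fix i assume i: "i \<in> D"
    have "card (nbhd n E i \<inter> D) \<ge> 1" using Ddeg i k1 by auto
    then obtain u where u: "u \<in> nbhd n E i \<inter> D" by (metis card.empty ex_in_conv not_one_le_zero)
    obtain T where T: "T \<in> fam n E k i" "T \<subseteq> D" using exists_T[OF u, of k] Ddeg i k1 by auto
    have "y i ^ k = (\<Prod>j\<in>T. y j)" using T fam_finite_T[OF T(1)] i by (simp add: y_def subset_iff)
    also have "\<dots> \<le> ka n E k y i" by (rule ka_ge_term[OF _ T(1)]) (simp add: y_def)
    finally show "1 * y i ^ k \<le> ka n E k y i" by simp
  qed
  moreover have "sum y D = 1" using cD Dne by (simp add: y_def)
  ultimately have "feas 1 y" by (auto simp: feas_def y_def)
  thus ?thesis by blast
qed

lemma bdd: "bdd_above {t. \<exists>y. feas t y}"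
  using feas_bound by (auto intro!: bdd_aboveI[of _ BB])

lemma feas_le: "feas t y \<Longrightarrow> t \<le> rs"
  unfolding rs_def by (rule cSup_upper[OF _ bdd]) auto

lemma rs_ge1: "rs \<ge> 1" using feas_one feas_le by blast

lemma pos_le:
  assumes "pos t z" shows "t \<le> rs"
proof -
  have zD: "\<And>j. j \<notin> D \<Longrightarrow> z j = 0" and zp: "\<And>j. j \<in> D \<Longrightarrow> 0 < z j"
    and c: "\<And>i. i \<in> D \<Longrightarrow> t * z i ^ k \<le> ka n E k z i" using assms by (auto simp: pos_def)
  define s where "s = sum z D"
  have sp: "s > 0" unfolding s_def using Dne zp by (intro sum_pos) auto
  define y where "y = (\<lambda>j. (1 / s) * z j)"
  have "feas t y"
    unfolding feas_def
  proof (intro conjI allI impI ballI)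
    fix j show "0 \<le> y j" using zD zp sp unfolding y_def
      by (cases "j \<in> D") (auto intro: less_imp_le)
  next
    fix j assume "j \<notin> D" thus "y j = 0" using zD by (simp add: y_def)
  next
    have "sum y D = (1/s) * s" by (simp add: y_def s_def sum_distrib_left)
    thus "sum y D = 1" using sp by simp
  next
    fix i assume i: "i \<in> D"
    have "t * y i ^ k = (1/s)^k * (t * z i ^ k)" by (simp add: y_def power_mult_distrib power_divide)
    also have "\<dots> \<le> (1/s)^k * ka n E k z i" using c[OF i] sp by (intro mult_left_mono) auto
    also have "\<dots> = ka n E k y i" unfolding y_def ka_scale ..
    finally show "t * y i ^ k \<le> ka n E k y i" .
  qed
  thus ?thesis by (rule feas_le)
qed

lemma attain: "\<exists>y. feas rs y"
proof -
  have "\<forall>m. \<exists>t y. feas t y \<and> rs - inverse (real (Suc m)) < t"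
  proof
    fix m
    have "rs - inverse (real (Suc m)) < rs" by simp
    then obtain t where "t \<in> {t. \<exists>y. feas t y}" "rs - inverse (real (Suc m)) < t"
      unfolding rs_def using less_cSupD feas_one by (metis (mono_tags, lifting) empty_Collect_eq)
    thus "\<exists>t y. feas t y \<and> rs - inverse (real (Suc m)) < t" by auto
  qed
  then obtain tt f where tf: "\<And>m. feas (tt m) (f m)" "\<And>m. rs - inverse (real (Suc m)) < tt m"
    by metis
  have ttle: "\<And>m. tt m \<le> rs" using tf feas_le by blast
  have ttlim: "tt \<longlonglongrightarrow> rs"
  proof (rule tendsto_sandwich[of "\<lambda>m. rs - inverse (real (Suc m))" _ _ "\<lambda>m. rs"])
    show "\<forall>\<^sub>F m in sequentially. rs - inverse (real (Suc m)) \<le> tt m"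
      using tf(2) less_imp_le by (intro always_eventually allI) blast
    show "\<forall>\<^sub>F m in sequentially. tt m \<le> rs" using ttle by auto
    show "(\<lambda>m. rs - inverse (real (Suc m))) \<longlonglongrightarrow> rs"
      using tendsto_diff[OF tendsto_const LIMSEQ_inverse_real_of_nat] by simp
  qed simp
  have fb: "\<And>m j. j \<in> D \<Longrightarrow> \<bar>f m j\<bar> \<le> 1"
  proof -
    fix m j assume j: "j \<in> D"
    have "f m j \<le> sum (f m) D" using j tf(1)[of m] by (intro member_le_sum) (auto simp: feas_def)
    thus "\<bar>f m j\<bar> \<le> 1" using tf(1)[of m] by (auto simp: feas_def)
  qed
  obtain r Y where rY: "strict_mono r" "\<forall>j\<in>D. (\<lambda>m. f (r m) j) \<longlonglongrightarrow> Y j"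
  proof -
    have "\<exists>r Y. strict_mono r \<and> (\<forall>j\<in>D. (\<lambda>m. f (r m) j) \<longlonglongrightarrow> Y j)"
      by (rule bw_finite[OF finD]) (rule fb)
    thus ?thesis using that by blast
  qed
  define Y' where "Y' = (\<lambda>j. if j \<in> D then Y j else 0)"
  have lim: "\<And>j. (\<lambda>m. f (r m) j) \<longlonglongrightarrow> Y' j"
  proof -
    fix j show "(\<lambda>m. f (r m) j) \<longlonglongrightarrow> Y' j"
    proof (cases "j \<in> D")
      case True thus ?thesis using rY by (simp add: Y'_def)
    next
      case False thus ?thesis using tf(1) by (simp add: Y'_def feas_def)
    qed
  qed
  have tlim: "(\<lambda>m. tt (r m)) \<longlonglongrightarrow> rs" using LIMSEQ_subseq_LIMSEQ[OF ttlim rY(1)] by (simp add: o_def)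
  have "feas rs Y'"
    unfolding feas_def
  proof (intro conjI allI impI ballI)
    fix j show "0 \<le> Y' j"
      by (rule LIMSEQ_le_const[OF lim]) (use tf(1) in \<open>auto simp: feas_def\<close>)
  next
    fix j assume "j \<notin> D" thus "Y' j = 0" by (simp add: Y'_def)
  next
    have "(\<lambda>m. sum (f (r m)) D) \<longlonglongrightarrow> sum Y' D" by (intro tendsto_sum lim)
    moreover have "(\<lambda>m. sum (f (r m)) D) = (\<lambda>m. 1)" using tf(1) by (auto simp: feas_def)
    ultimately show "sum Y' D = 1" using LIMSEQ_unique tendsto_const by metis
  next
    fix i assume i: "i \<in> D"
    have "(\<lambda>m. ka n E k (f (r m)) i - tt (r m) * f (r m) i ^ k) \<longlonglongrightarrow> ka n E k Y' i - rs * Y' i ^ k"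
      by (intro tendsto_intros ka_tendsto lim tlim)
    hence "0 \<le> ka n E k Y' i - rs * Y' i ^ k"
      by (rule LIMSEQ_le_const) (use tf(1) i in \<open>auto simp: feas_def\<close>)
    thus "rs * Y' i ^ k \<le> ka n E k Y' i" by simp
  qed
  thus ?thesis by blast
qed


lemma layering:
  assumes "feas rs Y" shows "\<exists>z. pos rs z"
proof -
  have Y0: "\<And>j. 0 \<le> Y j" and YD: "\<And>j. j \<notin> D \<Longrightarrow> Y j = 0" and s1: "sum Y D = 1"
    and c: "\<And>i. i \<in> D \<Longrightarrow> rs * Y i ^ k \<le> ka n E k Y i"
    using assms by (auto simp: feas_def)
  define S where "S = {j\<in>D. Y j > 0}"
  have SD: "S \<subseteq> D" by (auto simp: S_def)
  have "S \<noteq> {}"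
  proof
    assume "S = {}"
    hence "\<forall>j\<in>D. Y j = 0" using Y0 by (auto simp: S_def less_eq_real_def)
    hence "sum Y D = 0" by simp
    with s1 show False by simp
  qed
  then obtain a where a: "a \<in> S" by auto
  have reach: "\<And>v. v \<in> D \<Longrightarrow> \<exists>j. v \<in> layer E D S j"
    using Dconn a SD by (intro layer_reach[OF _ a]) (auto simp: induced_connected_rel)
  define d where "d = dd E D S"
  define L where "L = Max (d ` D)"
  have dL: "\<And>v. v \<in> D \<Longrightarrow> d v \<le> L" unfolding L_def by (intro Max_ge) auto
  define K where "K = k + 1"
  define F where "F = K ^ (L + 1)"
  define f where "f = (\<lambda>v. K ^ (L + 1 - d v))"
  define e where "e = (\<lambda>v. F - f v)"
  have fF: "\<And>v. f v \<le> F" unfolding f_def F_def K_def by (intro power_increasing) auto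
  have f1: "\<And>v. 1 \<le> f v" unfolding f_def K_def by simp
  have eS: "\<And>v. v \<in> S \<Longrightarrow> e v = 0" unfolding e_def f_def F_def d_def by (simp add: dd_S)
  have eF: "\<And>v. e v \<le> F" unfolding e_def by simp
  define cc where "cc = (\<lambda>j. if j \<in> S then Y j else 1)"
  have ccp: "\<And>j. cc j > 0" by (auto simp: cc_def S_def)
  define z where "z = (\<lambda>(\<epsilon>::real) j. if j \<in> D then cc j * \<epsilon> ^ e j else 0)"
  have key: "\<forall>b\<in>D - S. \<exists>C>0. \<forall>\<epsilon>. 0 < \<epsilon> \<longrightarrow> \<epsilon> \<le> 1 \<longrightarrow> C * \<epsilon> ^ (k * e b - 1) \<le> ka n E k (z \<epsilon>) b"
  proof
    fix b assume b: "b \<in> D - S"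
    obtain u where u: "E u b" "d u < d b" "u \<in> layer E D S (d b)"
      using dd_step[OF reach, of b] b unfolding d_def by auto
    have uD: "u \<in> D" using u(3) layer_sub[OF SD] by auto
    have "u \<in> nbhd n E b \<inter> D" using uD Dsub u(1) Esym by (auto simp: nbhd_def)
    then obtain T where T: "T \<in> fam n E k b" "u \<in> T" "T \<subseteq> D"
      using exists_T[of u n E b D k] Ddeg b k1 by auto
    have fT: "finite T" "card T = k" using fam_finite_T[OF T(1)] by auto
    have fu: "K * f b \<le> f u"
    proof -
      have "d b \<le> L" using dL b by auto
      hence "Suc (L + 1 - d b) \<le> L + 1 - d u" using u(2) by simp
      hence "K ^ Suc (L + 1 - d b) \<le> K ^ (L + 1 - d u)" by (intro power_increasing) (auto simp: K_def)
      thus ?thesis unfolding f_def by simp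
    qed
    have sumle: "sum e T \<le> e u + (k - 1) * F"
    proof -
      have "sum e T = e u + sum e (T - {u})" using fT T(2) by (simp add: sum.remove)
      also have "sum e (T - {u}) \<le> (\<Sum>j\<in>T - {u}. F)" by (intro sum_mono eF)
      also have "\<dots> = (k - 1) * F" using fT T(2) by simp
      finally show ?thesis by simp
    qed
    have expo: "sum e T + 1 \<le> k * e b"
    proof -
      have "e u + (k - 1) * F + 1 \<le> k * e b"
        unfolding e_def by (rule exp_ineq) (use fF f1 fu k1 in \<open>auto simp: K_def\<close>)
      thus ?thesis using sumle by linarith
    qed
    define C where "C = (\<Prod>j\<in>T. cc j)"
    have Cp: "C > 0" unfolding C_def using ccp by (intro prod_pos) auto
    show "\<exists>C>0. \<forall>\<epsilon>. 0 < \<epsilon> \<longrightarrow> \<epsilon> \<le> 1 \<longrightarrow> C * \<epsilon> ^ (k * e b - 1) \<le> ka n E k (z \<epsilon>) b"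
    proof (intro exI[of _ C] conjI allI impI Cp)
      fix \<epsilon> :: real assume ep: "0 < \<epsilon>" "\<epsilon> \<le> 1"
      have "C * \<epsilon> ^ (k * e b - 1) \<le> C * \<epsilon> ^ sum e T"
        using ep Cp expo by (intro mult_left_mono power_decreasing) auto
      also have "\<dots> = (\<Prod>j\<in>T. z \<epsilon> j)"
        unfolding C_def z_def using T(3) fT
        by (simp add: prod.distrib power_sum subset_iff cong: prod.cong)
      also have "\<dots> \<le> ka n E k (z \<epsilon>) b"
        by (rule ka_ge_term[OF _ T(1)]) (use ep ccp in \<open>auto simp: z_def less_imp_le\<close>)
      finally show "C * \<epsilon> ^ (k * e b - 1) \<le> ka n E k (z \<epsilon>) b" .
    qed
  qed
  then obtain CC where CC: "\<And>b. b \<in> D - S \<Longrightarrow> CC b > 0"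
    "\<And>b \<epsilon>. b \<in> D - S \<Longrightarrow> 0 < \<epsilon> \<Longrightarrow> \<epsilon> \<le> 1 \<Longrightarrow> CC b * \<epsilon> ^ (k * e b - 1) \<le> ka n E k (z \<epsilon>) b"
    by metis
  define \<epsilon> where "\<epsilon> = Min (insert 1 ((\<lambda>b. CC b / rs) ` (D - S)))"
  have rsp: "rs > 0" using rs_ge1 by simp
  have ep: "0 < \<epsilon>" unfolding \<epsilon>_def using CC(1) rsp by (subst Min_gr_iff) auto
  have ep1: "\<epsilon> \<le> 1" unfolding \<epsilon>_def by (intro Min_le) auto
  have epC: "\<And>b. b \<in> D - S \<Longrightarrow> rs * \<epsilon> \<le> CC b"
  proof -
    fix b assume b: "b \<in> D - S"
    have "\<epsilon> \<le> CC b / rs" unfolding \<epsilon>_def using b by (intro Min_le) auto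
    thus "rs * \<epsilon> \<le> CC b" using rsp by (simp add: field_simps)
  qed
  have zY: "\<And>j. Y j \<le> z \<epsilon> j"
  proof -
    fix j show "Y j \<le> z \<epsilon> j"
    proof (cases "j \<in> D")
      case False thus ?thesis using YD by (simp add: z_def)
    next
      case True
      show ?thesis
      proof (cases "j \<in> S")
        case True thus ?thesis using eS \<open>j \<in> D\<close> by (simp add: z_def cc_def)
      next
        case False
        hence "Y j \<le> 0" using \<open>j \<in> D\<close> by (auto simp: S_def)
        thus ?thesis using ep \<open>j \<in> D\<close> ccp by (simp add: z_def) (smt (verit) mult_pos_pos zero_less_power)
      qed
    qed
  qed
  have "pos rs (z \<epsilon>)"
    unfolding pos_def
  proof (intro conjI allI impI ballI)
    fix j assume "j \<notin> D" thus "z \<epsilon> j = 0" by (simp add: z_def)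
  next
    fix j assume "j \<in> D" thus "0 < z \<epsilon> j" using ccp ep by (simp add: z_def)
  next
    fix i assume i: "i \<in> D"
    show "rs * z \<epsilon> i ^ k \<le> ka n E k (z \<epsilon>) i"
    proof (cases "i \<in> S")
      case True
      have "rs * z \<epsilon> i ^ k = rs * Y i ^ k" using True eS i by (simp add: z_def cc_def)
      also have "\<dots> \<le> ka n E k Y i" using c i by simp
      also have "\<dots> \<le> ka n E k (z \<epsilon>) i" by (rule ka_mono[OF Y0 zY])
      finally show ?thesis .
    next
      case False
      hence b: "i \<in> D - S" using i by simp
      have ke: "k * e i \<ge> 1"
      proof -
        have "d i \<noteq> 0"
        proof
          assume "d i = 0"
          hence "i \<in> layer E D S 0" using LeastI_ex[OF reach[OF i]] unfolding d_def dd_def by simp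
          thus False using False by simp
        qed
        hence "f i < F" unfolding f_def F_def K_def using k1 by (intro power_strict_increasing) auto
        hence "e i \<ge> 1" unfolding e_def by simp
        thus ?thesis using k1 by (simp add: Suc_le_eq)
      qed
      have "rs * z \<epsilon> i ^ k = rs * \<epsilon> ^ (k * e i)" using False i
        by (simp add: z_def cc_def power_mult[symmetric] mult.commute)
      also have "\<dots> = (rs * \<epsilon>) * \<epsilon> ^ (k * e i - 1)"
        using ke by (metis (no_types, lifting) Suc_diff_le diff_Suc_1 mult.assoc power_Suc)
      also have "\<dots> \<le> CC i * \<epsilon> ^ (k * e i - 1)"
        using epC[OF b] ep by (intro mult_right_mono) auto
      also have "\<dots> \<le> ka n E k (z \<epsilon>) i" using CC(2)[OF b ep ep1] .
      finally show ?thesis .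
    qed
  qed
  thus ?thesis by blast
qed


definition strict :: "(nat \<Rightarrow> real) \<Rightarrow> nat set" where
  "strict z = {i\<in>D. rs * z i ^ k < ka n E k z i}"

lemma eigen: "\<exists>z. pos rs z \<and> (\<forall>i\<in>D. ka n E k z i = rs * z i ^ k)"
proof -
  define A where "A = {card (strict z) | z. pos rs z}"
  have Ane: "A \<noteq> {}" using layering attain unfolding A_def by blast
  have Ale: "A \<subseteq> {..card D}" unfolding A_def strict_def by (auto intro!: card_mono)
  hence finA: "finite A" using finite_subset by blast
  have "Max A \<in> A" using Ane finA by (rule Max_in[rotated])
  then obtain z where z: "pos rs z" "card (strict z) = Max A" unfolding A_def by auto
  have maxz: "\<And>w. pos rs w \<Longrightarrow> card (strict w) \<le> card (strict z)"
    unfolding z(2) using finA by (intro Max_ge) (auto simp: A_def)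
  have zD: "\<And>j. j \<notin> D \<Longrightarrow> z j = 0" and zp: "\<And>j. j \<in> D \<Longrightarrow> 0 < z j"
    and c: "\<And>i. i \<in> D \<Longrightarrow> rs * z i ^ k \<le> ka n E k z i" using z(1) by (auto simp: pos_def)
  have z0: "\<And>j. 0 \<le> z j" using zD zp by (metis less_eq_real_def)
  define P where "P = strict z"
  have PD: "P \<subseteq> D" by (auto simp: P_def strict_def)
  show ?thesis
  proof (cases "P = {}")
    case True
    hence "\<forall>i\<in>D. ka n E k z i = rs * z i ^ k" using c by (force simp: P_def strict_def)
    thus ?thesis using z(1) by blast
  next
    case Pne: False
    show ?thesis
    proof (cases "D - P = {}")
      case True
      hence allP: "\<And>i. i \<in> D \<Longrightarrow> rs * z i ^ k < ka n E k z i" by (auto simp: P_def strict_def)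
      define t where "t = Min ((\<lambda>i. ka n E k z i / z i ^ k) ` D)"
      have "rs < t" unfolding t_def using Dne
      proof (subst Min_gr_iff, simp_all, intro ballI)
        fix i assume i: "i \<in> D"
        have "z i ^ k > 0" using zp[OF i] by simp
        thus "rs < ka n E k z i / z i ^ k" using allP[OF i] by (simp add: field_simps)
      qed
      moreover have "pos t z" unfolding pos_def
      proof (intro conjI allI impI ballI)
        fix i assume i: "i \<in> D"
        have zk: "z i ^ k > 0" using zp[OF i] by simp
        have "t \<le> ka n E k z i / z i ^ k" unfolding t_def using i by (intro Min_le) auto
        thus "t * z i ^ k \<le> ka n E k z i" using zk by (simp add: field_simps)
      qed (use zD zp in auto)
      ultimately show ?thesis using pos_le by fastforce
    next
      case False
      obtain i j where ij: "i \<in> P" "j \<in> D - P" "E i j"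
        using connected_cross[OF Dconn PD Pne False] by blast
      define ind where "ind = (\<lambda>l. if l \<in> P then 1 else (0::real))"
      define w where "w = (\<lambda>(\<delta>::real) l. z l + ind l * \<delta>)"
      have ev1: "\<forall>\<^sub>F \<delta> in at_right 0. \<forall>p\<in>P. 0 < ka n E k (w \<delta>) p - rs * w \<delta> p ^ k"
      proof (rule eventually_ball_finite)
        show "finite P" using PD finite_subset finD by blast
        show "\<forall>p\<in>P. \<forall>\<^sub>F \<delta> in at_right 0. 0 < ka n E k (w \<delta>) p - rs * w \<delta> p ^ k"
        proof
          fix p assume p: "p \<in> P"
          have "((\<lambda>\<delta>. ka n E k (w \<delta>) p - rs * w \<delta> p ^ k) \<longlongrightarrow>
                  ka n E k (w 0) p - rs * w 0 p ^ k) (at_right 0)"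
            unfolding ka_def w_def by (intro tendsto_intros)
          moreover have "0 < ka n E k (w 0) p - rs * w 0 p ^ k"
            using p by (simp add: w_def P_def strict_def)
          ultimately show "\<forall>\<^sub>F \<delta> in at_right 0. 0 < ka n E k (w \<delta>) p - rs * w \<delta> p ^ k"
            by (rule order_tendstoD(1))
        qed
      qed
      have "\<forall>\<^sub>F \<delta> in at_right (0::real). 0 < \<delta> \<and> (\<forall>p\<in>P. 0 < ka n E k (w \<delta>) p - rs * w \<delta> p ^ k)"
        using ev1 eventually_at_right_less by (rule eventually_conj[rotated])
      then obtain \<delta> where \<delta>: "0 < \<delta>" "\<And>p. p \<in> P \<Longrightarrow> rs * w \<delta> p ^ k < ka n E k (w \<delta>) p"
        using eventually_happens'[OF trivial_limit_at_right_real] by force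
      have ind0: "\<And>l. 0 \<le> ind l" by (simp add: ind_def)
      have zw: "\<And>l. z l \<le> w \<delta> l" using \<delta>(1) ind0 by (simp add: w_def)
      have wD: "\<And>l. l \<notin> P \<Longrightarrow> w \<delta> l = z l" by (simp add: w_def ind_def)
      have jstrict: "ka n E k z j < ka n E k (w \<delta>) j"
      proof -
        have "i \<in> nbhd n E j \<inter> D" using ij Esym PD Dsub by (auto simp: nbhd_def)
        then obtain T where T: "T \<in> fam n E k j" "i \<in> T" "T \<subseteq> D"
          using exists_T[of i n E j D k] Ddeg ij k1 by auto
        show ?thesis unfolding ka_def
        proof (rule sum_strict_mono_ex1)
          show "finite (fam n E k j)" by simp
          show "\<forall>x\<in>fam n E k j. (\<Prod>l\<in>x. z l) \<le> (\<Prod>l\<in>x. w \<delta> l)"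
            using z0 zw by (intro ballI prod_mono) auto
          show "\<exists>a\<in>fam n E k j. (\<Prod>l\<in>a. z l) < (\<Prod>l\<in>a. w \<delta> l)"
          proof (intro bexI[OF _ T(1)] prod_strict_mono_one[where i=i])
            show "finite T" using fam_finite_T[OF T(1)] by simp
            show "z i < w \<delta> i" using ij(1) \<delta>(1) by (simp add: w_def ind_def)
          qed (use T z0 zw zp \<delta>(1) in \<open>force intro: less_le_trans\<close>)+
        qed
      qed
      have posw: "pos rs (w \<delta>)" unfolding pos_def
      proof (intro conjI allI impI ballI)
        fix l assume "l \<notin> D" thus "w \<delta> l = 0" using zD PD wD by (metis subsetD)
      next
        fix l assume "l \<in> D" thus "0 < w \<delta> l" using zp zw less_le_trans by blast
      next
        fix l assume l: "l \<in> D"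
        show "rs * w \<delta> l ^ k \<le> ka n E k (w \<delta>) l"
        proof (cases "l \<in> P")
          case True thus ?thesis using \<delta>(2) by (simp add: less_imp_le)
        next
          case False
          have "rs * w \<delta> l ^ k = rs * z l ^ k" using wD[OF False] by simp
          also have "\<dots> \<le> ka n E k z l" using c l by simp
          also have "\<dots> \<le> ka n E k (w \<delta>) l" by (rule ka_mono[OF z0 zw])
          finally show ?thesis .
        qed
      qed
      have "insert j P \<subseteq> strict (w \<delta>)"
      proof
        fix l assume "l \<in> insert j P"
        then consider "l = j" | "l \<in> P" by auto
        thus "l \<in> strict (w \<delta>)"
        proof cases
          case 1
          have "rs * w \<delta> j ^ k = rs * z j ^ k" using wD ij by simp
          also have "\<dots> \<le> ka n E k z j" using c ij by simp
          also have "\<dots> < ka n E k (w \<delta>) j" by (rule jstrict)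
          finally show ?thesis using 1 ij by (simp add: strict_def)
        next
          case 2 thus ?thesis using \<delta>(2) PD by (auto simp: strict_def)
        qed
      qed
      hence "card (insert j P) \<le> card (strict (w \<delta>))"
        by (intro card_mono) (auto simp: strict_def)
      moreover have "card (insert j P) = Suc (card P)"
        using ij PD finite_subset[OF PD finD] by (intro card_insert_disjoint) auto
      ultimately show ?thesis using maxz[OF posw] by (simp add: P_def)
    qed
  qed
qed

end

lemma perron_connected:
  assumes "k \<ge> 1" "D \<subseteq> {1..n}" "D \<noteq> {}" "\<forall>v\<in>D. card (nbhd n E v \<inter> D) \<ge> k"
    "induced_connected E D" "\<forall>i j. E i j \<longrightarrow> E j i"
  shows "\<exists>\<mu> z. \<mu> \<ge> 1 \<and> (\<forall>j. j \<notin> D \<longrightarrow> z j = 0) \<and> (\<forall>j\<in>D. 0 < z j)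
     \<and> (\<forall>i\<in>D. ka n E k z i = \<mu> * z i ^ k)"
proof -
  obtain z where "pos n k E D (rs n k E D) z" "\<forall>i\<in>D. ka n E k z i = rs n k E D * z i ^ k"
    using eigen[OF assms] by blast
  moreover have "rs n k E D \<ge> 1" using rs_ge1[OF assms] .
  ultimately show ?thesis unfolding pos_def[OF assms] by blast
qed

lemma bdd_eig: "bdd_above {cmod lam | lam. kadj_eigenvalue n E k lam}"
proof (rule bdd_aboveI[of _ "2 ^ n"])
  fix r assume "r \<in> {cmod lam | lam. kadj_eigenvalue n E k lam}"
  then obtain lam x where r: "r = cmod lam" and ep: "kadj_eigenpair n E k lam x"
    by (auto simp: kadj_eigenvalue_def)
  have ne: "\<exists>i\<in>{1..n}. x i \<noteq> 0" and eq: "\<And>i. i \<in> {1..n} \<Longrightarrow> kadj_apply n E k x i = lam * x i ^ k"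
    using ep by (auto simp: kadj_eigenpair_def)
  define M where "M = Max ((\<lambda>i. cmod (x i)) ` {1..n})"
  have "M \<in> (\<lambda>i. cmod (x i)) ` {1..n}" unfolding M_def using ne by (intro Max_in) auto
  then obtain i where i: "i \<in> {1..n}" "cmod (x i) = M" by auto
  have le: "\<And>j. j \<in> {1..n} \<Longrightarrow> cmod (x j) \<le> M" unfolding M_def by (intro Max_ge) auto
  have Mp: "M > 0"
  proof -
    obtain j where j: "j \<in> {1..n}" "x j \<noteq> 0" using ne by auto
    hence "0 < cmod (x j)" by simp
    also have "\<dots> \<le> M" using le[OF j(1)] .
    finally show ?thesis .
  qed
  have "cmod lam * M ^ k = cmod (kadj_apply n E k x i)" using eq[OF i(1)] i(2) by (simp add: norm_mult norm_power)
  also have "\<dots> \<le> (\<Sum>T\<in>fam n E k i. cmod (\<Prod>j\<in>T. x j))"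
    unfolding kadj_apply_def fam_def[symmetric] by (rule norm_sum)
  also have "\<dots> \<le> (\<Sum>T\<in>fam n E k i. M ^ k)"
  proof (intro sum_mono)
    fix T assume T: "T \<in> fam n E k i"
    have "cmod (\<Prod>j\<in>T. x j) = (\<Prod>j\<in>T. cmod (x j))" by (simp add: prod_norm)
    also have "\<dots> \<le> (\<Prod>j\<in>T. M)" using le T
      by (intro prod_mono) (auto simp: fam_def nbhd_def)
    also have "\<dots> = M ^ k" using fam_finite_T[OF T] by simp
    finally show "cmod (\<Prod>j\<in>T. x j) \<le> M ^ k" .
  qed
  also have "\<dots> = real (card (fam n E k i)) * M ^ k" by simp
  also have "\<dots> \<le> 2 ^ n * M ^ k" using card_fam[of n E k i] Mp
    by (intro mult_right_mono) (auto simp del: of_nat_power simp: of_nat_power[symmetric])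
  finally show "r \<le> 2 ^ n" using Mp r by (simp add: mult_le_cancel_right)
qed

lemma eig_le_rho:
  assumes "kadj_eigenpair n E k (complex_of_real \<mu>) z" "\<mu> \<ge> 0"
  shows "\<mu> \<le> rho_k n E k"
proof -
  have "cmod (complex_of_real \<mu>) \<in> {cmod lam | lam. kadj_eigenvalue n E k lam}"
    using assms(1) unfolding kadj_eigenvalue_def by blast
  hence "cmod (complex_of_real \<mu>) \<le> rho_k n E k" unfolding rho_k_def by (rule cSup_upper[OF _ bdd_eig])
  thus ?thesis using assms(2) by simp
qed

lemma extend_eig:
  assumes "k \<ge> 1" "D \<subseteq> {1..n}" "D \<noteq> {}" "\<forall>v\<in>{1..n} - D. card (nbhd n E v \<inter> D) < k"
    "\<forall>j. j \<notin> D \<longrightarrow> z j = 0" "\<forall>j\<in>D. 0 < z j" "\<forall>i\<in>D. ka n E k z i = \<mu> * z i ^ k"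
  shows "kadj_eigenpair n E k (complex_of_real \<mu>) (\<lambda>i. complex_of_real (z i))"
  unfolding kadj_eigenpair_def
proof (intro conjI ballI)
  obtain v where "v \<in> D" using assms(3) by blast
  thus "\<exists>i\<in>{1..n}. complex_of_real (z i) \<noteq> 0" using assms(2,6) by (intro bexI[of _ v]) auto
next
  fix i assume i: "i \<in> {1..n}"
  have "ka n E k z i = \<mu> * z i ^ k"
  proof (cases "i \<in> D")
    case True thus ?thesis using assms(7) by simp
  next
    case False
    hence "ka n E k z i = 0" using assms(4,5) i by (intro ka_zero_closed[of D]) auto
    thus ?thesis using False assms(5) assms(1) by (cases k) auto
  qed
  thus "kadj_apply n E k (\<lambda>i. complex_of_real (z i)) i = complex_of_real \<mu> * complex_of_real (z i) ^ k"
    unfolding kadj_apply_real by simp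
qed

lemma core_max: "min_deg_ge n E k W \<Longrightarrow> W \<subseteq> k_core_vertices n E k"
  unfolding k_core_vertices_def by auto

lemma core_sub: "k_core_vertices n E k \<subseteq> {1..n}"
  unfolding k_core_vertices_def min_deg_ge_def by auto

lemma core_mdg: "min_deg_ge n E k (k_core_vertices n E k)"
  unfolding min_deg_ge_def
proof (intro conjI ballI core_sub)
  fix v assume "v \<in> k_core_vertices n E k"
  then obtain W where W: "min_deg_ge n E k W" "v \<in> W" unfolding k_core_vertices_def by auto
  have "k \<le> card (nbhd n E v \<inter> W)" using W by (auto simp: min_deg_ge_def)
  also have "\<dots> \<le> card (nbhd n E v \<inter> k_core_vertices n E k)"
    using core_max[OF W(1)] by (intro card_mono) auto
  finally show "k \<le> card (nbhd n E v \<inter> k_core_vertices n E k)" .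
qed

lemma core_closed:
  assumes "v \<in> {1..n} - k_core_vertices n E k"
  shows "card (nbhd n E v \<inter> k_core_vertices n E k) < k"
proof (rule ccontr)
  define C where "C = k_core_vertices n E k"
  assume "\<not> ?thesis"
  hence vk: "k \<le> card (nbhd n E v \<inter> C)" by (simp add: C_def)
  have "min_deg_ge n E k (insert v C)"
    unfolding min_deg_ge_def
  proof (intro conjI ballI)
    show "insert v C \<subseteq> {1..n}" using assms core_sub by (auto simp: C_def)
  next
    fix u assume "u \<in> insert v C"
    hence "k \<le> card (nbhd n E u \<inter> C)" using vk core_mdg by (auto simp: min_deg_ge_def C_def)
    also have "\<dots> \<le> card (nbhd n E u \<inter> insert v C)" by (intro card_mono) auto
    finally show "k \<le> card (nbhd n E u \<inter> insert v C)" .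
  qed
  hence "v \<in> C" using core_max[of n E k "insert v C"] by (auto simp: C_def)
  with assms show False by (simp add: C_def)
qed

lemma rel_sym: "\<forall>i j. E i j \<longrightarrow> E j i \<Longrightarrow> (rel E S)\<^sup>*\<^sup>* a b \<Longrightarrow> (rel E S)\<^sup>*\<^sup>* b a"
proof -
  assume s: "\<forall>i j. E i j \<longrightarrow> E j i" and ab: "(rel E S)\<^sup>*\<^sup>* a b"
  have "symp (rel E S)" using s by (auto simp: symp_def rel_def)
  hence "symp ((rel E S)\<^sup>*\<^sup>*)" by (rule symp_rtranclp)
  thus ?thesis using ab by (auto dest: sympD)
qed

lemma rho_ge1:
  assumes sym: "\<forall>i j. E i j \<longrightarrow> E j i" and k1: "k \<ge> 1" and ne: "k_core_vertices n E k \<noteq> {}"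
  shows "1 \<le> rho_k n E k"
proof -
  define C where "C = k_core_vertices n E k"
  obtain u0 where u0: "u0 \<in> C" using ne by (auto simp: C_def)
  define D where "D = {v\<in>C. (rel E C)\<^sup>*\<^sup>* u0 v}"
  have DC: "D \<subseteq> C" by (auto simp: D_def)
  have CS: "C \<subseteq> {1..n}" using core_sub by (simp add: C_def)
  have u0D: "u0 \<in> D" using u0 by (simp add: D_def)
  have nbD: "\<And>v. v \<in> D \<Longrightarrow> nbhd n E v \<inter> C \<subseteq> D"
  proof
    fix v w assume v: "v \<in> D" and w: "w \<in> nbhd n E v \<inter> C"
    have "rel E C v w" using v w DC by (auto simp: rel_def nbhd_def)
    with v have "(rel E C)\<^sup>*\<^sup>* u0 w" by (auto simp: D_def intro: rtranclp.rtrancl_into_rtrancl)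
    thus "w \<in> D" using w by (simp add: D_def)
  qed
  have deg: "\<forall>v\<in>D. card (nbhd n E v \<inter> D) \<ge> k"
  proof
    fix v assume v: "v \<in> D"
    have "nbhd n E v \<inter> D = nbhd n E v \<inter> C" using nbD[OF v] DC by auto
    thus "card (nbhd n E v \<inter> D) \<ge> k" using core_mdg v DC by (auto simp: min_deg_ge_def C_def)
  qed
  have toD: "\<And>v. (rel E C)\<^sup>*\<^sup>* u0 v \<Longrightarrow> (rel E D)\<^sup>*\<^sup>* u0 v"
  proof -
    fix v assume "(rel E C)\<^sup>*\<^sup>* u0 v"
    thus "(rel E D)\<^sup>*\<^sup>* u0 v"
    proof (induction rule: rtranclp_induct)
      case base thus ?case by simp
    next
      case (step y z)
      have "y \<in> D" "z \<in> D" using step(1,2) by (auto simp: D_def rel_def intro: rtranclp.rtrancl_into_rtrancl)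
      hence "rel E D y z" using step(2) by (auto simp: rel_def)
      thus ?case using step(3) by (simp add: rtranclp.rtrancl_into_rtrancl)
    qed
  qed
  have conn: "induced_connected E D"
    unfolding induced_connected_rel
  proof (intro ballI)
    fix a b assume a: "a \<in> D" and b: "b \<in> D"
    have "(rel E D)\<^sup>*\<^sup>* a u0" using toD a rel_sym[OF sym] by (auto simp: D_def)
    moreover have "(rel E D)\<^sup>*\<^sup>* u0 b" using toD b by (auto simp: D_def)
    ultimately show "(rel E D)\<^sup>*\<^sup>* a b" by simp
  qed
  have closed: "\<forall>v\<in>{1..n} - D. card (nbhd n E v \<inter> D) < k"
  proof
    fix v assume v: "v \<in> {1..n} - D"
    show "card (nbhd n E v \<inter> D) < k"
    proof (cases "v \<in> C")
      case True
      have "nbhd n E v \<inter> D = {}"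
      proof (rule ccontr)
        assume "nbhd n E v \<inter> D \<noteq> {}"
        then obtain w where w: "w \<in> nbhd n E v" "w \<in> D" by auto
        hence "rel E C w v" using True sym DC by (auto simp: rel_def nbhd_def)
        hence "(rel E C)\<^sup>*\<^sup>* u0 v" using w(2) by (auto simp: D_def intro: rtranclp.rtrancl_into_rtrancl)
        thus False using v True by (simp add: D_def)
      qed
      thus ?thesis using k1 by simp
    next
      case False
      have "card (nbhd n E v \<inter> D) \<le> card (nbhd n E v \<inter> C)" using DC by (intro card_mono) auto
      also have "\<dots> < k" using core_closed[of v n E k] v False by (simp add: C_def)
      finally show ?thesis .
    qed
  qed
  have DS: "D \<subseteq> {1..n}" using DC CS by auto
  have Dne: "D \<noteq> {}" using u0D by auto
  obtain \<mu> z where mz: "\<mu> \<ge> 1" "\<forall>j. j \<notin> D \<longrightarrow> z j = 0" "\<forall>j\<in>D. 0 < z j"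
     "\<forall>i\<in>D. ka n E k z i = \<mu> * z i ^ k"
    using perron_connected[OF k1 DS Dne deg conn sym] by blast
  have "kadj_eigenpair n E k (complex_of_real \<mu>) (\<lambda>i. complex_of_real (z i))"
    by (rule extend_eig[OF k1 DS Dne closed mz(2-4)])
  hence "\<mu> \<le> rho_k n E k" using mz(1) by (intro eig_le_rho) auto
  thus ?thesis using mz(1) by simp
qed

theorem theorem3p2:
  fixes n k :: nat and E :: "nat \<Rightarrow> nat \<Rightarrow> bool" and x :: "nat \<Rightarrow> real"
  assumes "simple_graph n E"
    and "k \<ge> 1"
    and "k_core_vertices n E k \<noteq> {}"
    and "\<forall>i\<in>{1..n}. x i \<ge> 0"
    and "kadj_eigenpair n E k (complex_of_real (rho_k n E k)) (\<lambda>i. complex_of_real (x i))"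
  shows "supp n x \<subseteq> k_core_vertices n E k
    \<and> (induced_connected E (k_core_vertices n E k) \<longrightarrow> supp n x = k_core_vertices n E k)"
proof -
  define C where "C = k_core_vertices n E k"
  define \<rho> where "\<rho> = rho_k n E k"
  have sym: "\<forall>i j. E i j \<longrightarrow> E j i" using assms(1) by (simp add: simple_graph_def)
  have k1: "k \<ge> 1" by (rule assms(2))
  have rho1: "1 \<le> \<rho>" unfolding \<rho>_def by (rule rho_ge1[OF sym k1 assms(3)])
  define x' where "x' = (\<lambda>j. if j \<in> {1..n} then x j else 0)"
  have x0: "\<And>j. 0 \<le> x' j" using assms(4) by (simp add: x'_def)
  have xne: "\<exists>i\<in>{1..n}. x i \<noteq> 0" using assms(5) by (simp add: kadj_eigenpair_def)
  have eqx: "\<And>i. i \<in> {1..n} \<Longrightarrow> ka n E k x' i = \<rho> * x' i ^ k"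
  proof -
    fix i assume i: "i \<in> {1..n}"
    have "complex_of_real (ka n E k x i) = complex_of_real (\<rho> * x i ^ k)"
      using assms(5) i unfolding kadj_eigenpair_def kadj_apply_real \<rho>_def by simp
    hence "ka n E k x i = \<rho> * x i ^ k" using of_real_eq_iff by blast
    moreover have "ka n E k x' i = ka n E k x i" by (rule ka_cong) (simp add: x'_def)
    ultimately show "ka n E k x' i = \<rho> * x' i ^ k" using i by (simp add: x'_def)
  qed
  have suppx: "\<And>j. j \<in> supp n x \<longleftrightarrow> j \<in> {1..n} \<and> 0 < x' j"
    using assms(4) by (auto simp: supp_def x'_def less_eq_real_def)
  have part1: "supp n x \<subseteq> C"
  proof -
    have "min_deg_ge n E k (supp n x)"
      unfolding min_deg_ge_def
    proof (intro conjI ballI)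
      show "supp n x \<subseteq> {1..n}" by (auto simp: supp_def)
    next
      fix i assume i: "i \<in> supp n x"
      hence "0 < \<rho> * x' i ^ k" using suppx rho1 by simp
      hence "ka n E k x' i > 0" using eqx i suppx by simp
      then obtain T where T: "T \<in> fam n E k i" "\<forall>j\<in>T. x' j > 0" using ka_pos_term[of x' n E k i] x0 by blast
      have "T \<subseteq> nbhd n E i \<inter> supp n x" using T suppx by (auto simp: fam_def nbhd_def)
      hence "card T \<le> card (nbhd n E i \<inter> supp n x)" by (intro card_mono) auto
      thus "k \<le> card (nbhd n E i \<inter> supp n x)" using T fam_finite_T by auto
    qed
    thus ?thesis unfolding C_def by (rule core_max)
  qed
  have part2: "supp n x = C" if conn: "induced_connected E C"
  proof -
    have CS: "C \<subseteq> {1..n}" using core_sub by (simp add: C_def)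
    have Cne: "C \<noteq> {}" using assms(3) by (simp add: C_def)
    have finC: "finite C" using CS finite_subset by blast
    have deg: "\<forall>v\<in>C. card (nbhd n E v \<inter> C) \<ge> k" using core_mdg by (auto simp: C_def min_deg_ge_def)
    have closed: "\<forall>v\<in>{1..n} - C. card (nbhd n E v \<inter> C) < k" using core_closed by (auto simp: C_def)
    obtain \<mu> u where mu: "\<mu> \<ge> 1" "\<forall>j. j \<notin> C \<longrightarrow> u j = 0" "\<forall>j\<in>C. 0 < u j"
      "\<forall>i\<in>C. ka n E k u i = \<mu> * u i ^ k"
      using perron_connected[OF k1 CS Cne deg conn sym] by blast
    have "kadj_eigenpair n E k (complex_of_real \<mu>) (\<lambda>i. complex_of_real (u i))"
      by (rule extend_eig[OF k1 CS Cne closed mu(2-4)])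
    hence muR: "\<mu> \<le> \<rho>" unfolding \<rho>_def using mu(1) by (intro eig_le_rho) auto
    have xC: "\<And>j. j \<notin> C \<Longrightarrow> x' j = 0" using part1 suppx x0 by (metis less_eq_real_def subsetD x'_def)
    obtain i1 where i1: "i1 \<in> {1..n}" "x i1 \<noteq> 0" using xne by auto
    have i1C: "i1 \<in> C" using i1 part1 by (auto simp: supp_def)
    define cv where "cv = Max ((\<lambda>i. x' i / u i) ` C)"
    have "cv \<in> (\<lambda>i. x' i / u i) ` C" unfolding cv_def using Cne finC by (intro Max_in) auto
    then obtain i0 where i0: "i0 \<in> C" "cv = x' i0 / u i0" by auto
    have cvge: "\<And>j. j \<in> C \<Longrightarrow> x' j / u j \<le> cv" unfolding cv_def using finC by (intro Max_ge) auto
    have "i1 \<in> supp n x" using i1 by (simp add: supp_def)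
    hence "0 < x' i1" using suppx by blast
    hence "0 < x' i1 / u i1" using i1C mu(3) by simp
    hence cvp: "cv > 0" using cvge[OF i1C] by simp
    define cu where "cu = (\<lambda>j. cv * u j)"
    have xle: "\<And>j. x' j \<le> cu j"
    proof -
      fix j show "x' j \<le> cu j"
      proof (cases "j \<in> C")
        case True thus ?thesis using cvge[OF True] mu(3) by (simp add: cu_def field_simps)
      next
        case False thus ?thesis using xC mu(2) by (simp add: cu_def)
      qed
    qed
    have cupos: "\<And>j. j \<in> C \<Longrightarrow> 0 < cu j" using cvp mu(3) by (simp add: cu_def)
    have kacu: "\<And>i. i \<in> C \<Longrightarrow> ka n E k cu i = \<mu> * cu i ^ k"
      using mu(4) by (simp add: cu_def ka_scale power_mult_distrib)
    have "u i0 > 0" using i0 mu(3) by simp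
    hence xi0: "x' i0 = cu i0" using i0 by (simp add: cu_def)
    have xi0p: "x' i0 > 0" using xi0 cupos i0 by simp
    have "\<rho> * x' i0 ^ k = ka n E k x' i0" using eqx i0 CS by auto
    also have "\<dots> \<le> ka n E k cu i0" by (rule ka_mono[OF x0 xle])
    also have "\<dots> = \<mu> * x' i0 ^ k" using kacu i0 xi0 by simp
    finally have "\<rho> \<le> \<mu>" using xi0p by (simp add: mult_le_cancel_right)
    hence rm: "\<rho> = \<mu>" using muR by simp
    define Q where "Q = {i\<in>C. x' i = cu i}"
    have "C \<subseteq> Q"
    proof
      fix v assume v: "v \<in> C"
      have "(rel E C)\<^sup>*\<^sup>* i0 v" using conn i0 v by (auto simp: induced_connected_rel)
      thus "v \<in> Q"
      proof (rule rel_closed_set)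
        show "i0 \<in> Q" using i0 xi0 by (simp add: Q_def)
      next
        fix a b assume a: "a \<in> Q" "a \<in> C" "b \<in> C" "E a b"
        show "b \<in> Q"
        proof (rule ccontr)
          assume "b \<notin> Q"
          hence blt: "x' b < cu b" using xle[of b] a(3) by (auto simp: Q_def)
          have "b \<in> nbhd n E a \<inter> C" using a CS by (auto simp: nbhd_def)
          then obtain T where T: "T \<in> fam n E k a" "b \<in> T" "T \<subseteq> C"
            using exists_T[of b n E a C k] deg a k1 by auto
          have "ka n E k x' a < ka n E k cu a" unfolding ka_def
          proof (rule sum_strict_mono_ex1)
            show "finite (fam n E k a)" by simp
            show "\<forall>T\<in>fam n E k a. (\<Prod>l\<in>T. x' l) \<le> (\<Prod>l\<in>T. cu l)"
              using x0 xle by (intro ballI prod_mono) auto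
            show "\<exists>T\<in>fam n E k a. (\<Prod>l\<in>T. x' l) < (\<Prod>l\<in>T. cu l)"
            proof (intro bexI[OF _ T(1)] prod_strict_mono_one[where i=b])
              show "finite T" using fam_finite_T[OF T(1)] by simp
            qed (use T x0 xle cupos blt in auto)
          qed
          moreover have "ka n E k x' a = ka n E k cu a"
            using eqx[of a] kacu[of a] a CS rm by (auto simp: Q_def)
          ultimately show False by simp
        qed
      qed
    qed
    have "C \<subseteq> supp n x"
    proof
      fix v assume v: "v \<in> C"
      hence "x' v = cu v" using \<open>C \<subseteq> Q\<close> by (auto simp: Q_def)
      hence "0 < x' v" using cupos[OF v] by simp
      thus "v \<in> supp n x" using suppx v CS by blast
    qed
    thus ?thesis using part1 by auto
  qed
  show ?thesis using part1 part2 unfolding C_def by blast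
qed

end
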